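(* Let $x,y\in\mathbb{Q}$ and let $\mathcal{A}$ be the Apollonian disk packing generated by a tricycle whose three disks have signed curvatures $1-y$, $x^2+y^2-y$ and $y$. Then there is a positive integer $N$ such that multiplying all curvatures of the disks of $\mathcal{A}$ by $N$ (i.e. rescaling the packing) yields an integral packing: every disk of the rescaled packing has integer curvature.
   Context: A tricycle is a triple of mutually tangent (generalized) disks (circles or lines, with signed curvatures, a line having curvature $0$ and an enclosing disk having negative curvature). A Descartes configuration is a quadruple of mutually tangent disks, with curvatures satisfying $(a+b+c+d)^2=2(a^2+b^2+c^2+d^2)$. The Apollonian disk packing generated by a tricycle is obtained by recursively completing every tricycle already constructed to a Descartes configuration. The triple $(1-y,\,x^2+y^2-y,\,y)$ is the curvature triple of the tricycle described by the tangency Pauli spinor $(1,\,x+iy)$, i.e. by the two tangency spinors $(1,0)$ and $(x,y)$ issuing from the disk of curvature $y$. *)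

theory Defs
  imports Complex_Main
begin

definition descartes :: "real \<Rightarrow> real \<Rightarrow> real \<Rightarrow> real \<Rightarrow> bool" where
  "descartes a b c d \<longleftrightarrow> (a + b + c + d)\<^sup>2 = 2 * (a\<^sup>2 + b\<^sup>2 + c\<^sup>2 + d\<^sup>2)"

text \<open>Curvature triples of the tricycles of the Apollonian packing generated by a
  tricycle with curvatures a, b, c: start from (a,b,c); every tricycle (p,q,r)
  already constructed is completed to a Descartes configuration (p,q,r,s) (every
  solution s of the Descartes relation, i.e. both completions), which produces the
  new tricycles (p,q,s), (p,r,s), (q,r,s).\<close>
inductive apollonian_tricycle :: "real \<Rightarrow> real \<Rightarrow> real \<Rightarrow> real \<times> real \<times> real \<Rightarrow> bool"
  for a b c where
  init: "apollonian_tricycle a b c (a, b, c)"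
| step1: "apollonian_tricycle a b c (p, q, r) \<Longrightarrow> descartes p q r s \<Longrightarrow>
          apollonian_tricycle a b c (p, q, s)"
| step2: "apollonian_tricycle a b c (p, q, r) \<Longrightarrow> descartes p q r s \<Longrightarrow>
          apollonian_tricycle a b c (p, r, s)"
| step3: "apollonian_tricycle a b c (p, q, r) \<Longrightarrow> descartes p q r s \<Longrightarrow>
          apollonian_tricycle a b c (q, r, s)"

definition apollonian_curvatures :: "real \<Rightarrow> real \<Rightarrow> real \<Rightarrow> real set" where
  "apollonian_curvatures a b c =
     {k. \<exists>p q r. apollonian_tricycle a b c (p, q, r) \<and> (k = p \<or> k = q \<or> k = r)}"

end

theory Submission
  imports Defs
begin

lemma desc_root:
  assumes "descartes p q r s"
  shows "(s - (p+q+r))\<^sup>2 = 4*(p*q+q*r+r*p)"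
  using assms unfolding descartes_def by (simp add: power2_eq_square algebra_simps)

definition inv6 :: "real \<Rightarrow> real \<Rightarrow> real \<Rightarrow> real \<Rightarrow> bool" where
  "inv6 N p q r \<longleftrightarrow> N*p \<in> \<int> \<and> N*q \<in> \<int> \<and> N*r \<in> \<int> \<and>
     (\<exists>m\<in>\<int>. N\<^sup>2*(p*q+q*r+r*p) = m\<^sup>2)"

lemma step_key:
  assumes "inv6 N p q r" "descartes p q r s"
  shows "inv6 N p q s \<and> inv6 N p r s \<and> inv6 N q r s"
proof -
  from assms(1) obtain m where m: "m \<in> \<int>" "N\<^sup>2*(p*q+q*r+r*p) = m\<^sup>2"
    and P: "N*p \<in> \<int>" and Q: "N*q \<in> \<int>" and R: "N*r \<in> \<int>" unfolding inv6_def by blast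
  have "(N*s - (N*p+N*q+N*r))\<^sup>2 = N\<^sup>2 * (s - (p+q+r))\<^sup>2"
    by (simp add: power2_eq_square algebra_simps)
  also have "\<dots> = 4 * (N\<^sup>2*(p*q+q*r+r*p))" using desc_root[OF assms(2)]
    by simp
  also have "\<dots> = (2*m)\<^sup>2" using m(2)
    by (simp add: power2_eq_square)
  finally have "N*s - (N*p+N*q+N*r) = 2*m \<or> N*s - (N*p+N*q+N*r) = -(2*m)"
    using power2_eq_iff by blast
  then obtain e where e: "e = 1 \<or> e = -1" and S: "N*s = N*p+N*q+N*r + 2*e*m"
  proof (elim disjE)
    assume h: "N*s - (N*p+N*q+N*r) = 2*m"
    show ?thesis using that[of 1] h by simp
  next
    assume h: "N*s - (N*p+N*q+N*r) = -(2*m)"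
    show ?thesis using that[of "-1"] h by simp
  qed
  have eI: "e \<in> \<int>" using e by auto
  have SI: "N*s \<in> \<int>" using S P Q R m(1) eI by (simp add: Ints_add Ints_mult)
  have e2: "e*e = 1" using e by auto
  have c1: "N\<^sup>2*(p*q+q*s+s*p) = (N*p+N*q+e*m)\<^sup>2"
  proof -
    have "N\<^sup>2*(p*q+q*s+s*p) = N*p*(N*q) + (N*p+N*q)*(N*s)"
      by (simp add: power2_eq_square algebra_simps)
    also have "\<dots> = N\<^sup>2*(p*q+q*r+r*p) + (N*p+N*q)\<^sup>2 + 2*e*m*(N*p+N*q)"
      unfolding S by (simp add: power2_eq_square algebra_simps)
    also have "\<dots> = (N*p+N*q+e*m)\<^sup>2"
      unfolding m(2) using e2 by (simp add: power2_eq_square algebra_simps)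
    finally show ?thesis .
  qed
  have c2: "N\<^sup>2*(p*r+r*s+s*p) = (N*p+N*r+e*m)\<^sup>2"
  proof -
    have "N\<^sup>2*(p*r+r*s+s*p) = N*p*(N*r) + (N*p+N*r)*(N*s)"
      by (simp add: power2_eq_square algebra_simps)
    also have "\<dots> = N\<^sup>2*(p*q+q*r+r*p) + (N*p+N*r)\<^sup>2 + 2*e*m*(N*p+N*r)"
      unfolding S by (simp add: power2_eq_square algebra_simps)
    also have "\<dots> = (N*p+N*r+e*m)\<^sup>2"
      unfolding m(2) using e2 by (simp add: power2_eq_square algebra_simps)
    finally show ?thesis .
  qed
  have c3: "N\<^sup>2*(q*r+r*s+s*q) = (N*q+N*r+e*m)\<^sup>2"
  proof -
    have "N\<^sup>2*(q*r+r*s+s*q) = N*q*(N*r) + (N*q+N*r)*(N*s)"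
      by (simp add: power2_eq_square algebra_simps)
    also have "\<dots> = N\<^sup>2*(p*q+q*r+r*p) + (N*q+N*r)\<^sup>2 + 2*e*m*(N*q+N*r)"
      unfolding S by (simp add: power2_eq_square algebra_simps)
    also have "\<dots> = (N*q+N*r+e*m)\<^sup>2"
      unfolding m(2) using e2 by (simp add: power2_eq_square algebra_simps)
    finally show ?thesis .
  qed
  have i1: "N*p+N*q+e*m \<in> \<int>" "N*p+N*r+e*m \<in> \<int>" "N*q+N*r+e*m \<in> \<int>"
    using P Q R eI m(1) by (simp_all add: Ints_add Ints_mult)
  show ?thesis unfolding inv6_def using P Q R SI c1 c2 c3 i1 by blast
qed

lemma inv_all:
  assumes "apollonian_tricycle a b c t" "inv6 N a b c"
  shows "case t of (p,q,r) \<Rightarrow> inv6 N p q r"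
  using assms by (induction rule: apollonian_tricycle.induct) (auto dest: step_key)

theorem proposition6:
  fixes x y :: real
  assumes "x \<in> \<rat>" and "y \<in> \<rat>"
  shows "\<exists>N::nat. N > 0 \<and>
    (\<forall>k \<in> apollonian_curvatures (1 - y) (x\<^sup>2 + y\<^sup>2 - y) y. real N * k \<in> \<int>)"
proof -
  obtain a b where ab: "x = of_int a / of_int b" "b > 0"
    using assms(1) by (metis Rats_cases')
  obtain c d where cd: "y = of_int c / of_int d" "d > 0"
    using assms(2) by (metis Rats_cases')
  define D :: int where "D = b*d"
  have Dpos: "D > 0" unfolding D_def using ab cd by simp
  have Dx: "of_int D * x = of_int (a*d)" using ab unfolding D_def by (simp add: field_simps)
  have Dy: "of_int D * y = of_int (c*b)" using cd unfolding D_def by (simp add: field_simps)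
  define N :: nat where "N = nat (D*D)"
  have Npos: "N > 0" unfolding N_def using Dpos by simp
  have RN: "real N = of_int D * of_int D" unfolding N_def using Dpos by simp
  have "inv6 (real N) (1 - y) (x\<^sup>2 + y\<^sup>2 - y) y"
    unfolding inv6_def
  proof (intro conjI)
    have "real N * (1-y) = of_int (D*D - D*(c*b))" using Dy unfolding RN
      by (simp add: algebra_simps; metis mult.assoc)
    then show "real N * (1-y) \<in> \<int>" by simp
    have "real N * (x\<^sup>2 + y\<^sup>2 - y) = (of_int D * x)\<^sup>2 + (of_int D * y)\<^sup>2 - of_int D * (of_int D * y)"
      unfolding RN by (simp add: power2_eq_square algebra_simps)
    also have "\<dots> = of_int ((a*d)\<^sup>2 + (c*b)\<^sup>2 - D*(c*b))" unfolding Dx Dy by simp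
    finally show "real N * (x\<^sup>2 + y\<^sup>2 - y) \<in> \<int>" by simp
    have "real N * y = of_int (D*(c*b))" unfolding RN using Dy by (simp add: algebra_simps; metis mult.assoc)
    then show "real N * y \<in> \<int>" by simp
    have "(real N)\<^sup>2 * ((1-y)*(x\<^sup>2 + y\<^sup>2 - y) + (x\<^sup>2 + y\<^sup>2 - y)*y + y*(1-y)) = (real N * x)\<^sup>2"
      by (simp add: power2_eq_square algebra_simps)
    moreover have "real N * x = of_int (D*(a*d))" unfolding RN using Dx by (simp add: algebra_simps; metis mult.assoc)
    ultimately show "\<exists>m\<in>\<int>. (real N)\<^sup>2 * ((1-y)*(x\<^sup>2 + y\<^sup>2 - y) + (x\<^sup>2 + y\<^sup>2 - y)*y + y*(1-y)) = m\<^sup>2"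
      by (metis Ints_of_int)
  qed
  then have "\<forall>k \<in> apollonian_curvatures (1 - y) (x\<^sup>2 + y\<^sup>2 - y) y. real N * k \<in> \<int>"
    unfolding apollonian_curvatures_def inv6_def
    using inv_all[where N="real N"] by (fastforce simp: inv6_def)
  then show ?thesis using Npos by blast
qed

end
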